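(* For every $r\geq 2$, there exist $c_1,C>0$ such that the following holds. Let $H$ be an $r$-uniform hypergraph on $n$ vertices of average degree $d$. Let $X\subset V(H)$ be such that every vertex in $X$ has degree at least $Cd$. Then $\mathrm{disc}^{+}(H)\geq c_1|\partial(X)|$.
   Context: $\partial(X)$ denotes the set of edges of $H$ having at least one vertex in $X$. The average degree is $d=r|E(H)|/n$. With edge density $p=|E(H)|/\binom{n}{r}$ and $e(U)$ the number of edges contained in $U\subset V(H)$, $\mathrm{disc}(U)=e(U)-p\binom{|U|}{r}$ and $\mathrm{disc}^{+}(H)=\max_{U\subset V(H)}\mathrm{disc}(U)$. *)

theory Defs
  imports Complex_Main
begin

definition uniform_hypergraph :: "nat \<Rightarrow> 'a set \<Rightarrow> 'a set set \<Rightarrow> bool" where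
  "uniform_hypergraph r V E \<longleftrightarrow> finite V \<and> (\<forall>e\<in>E. e \<subseteq> V \<and> card e = r)"

definition hdegree :: "'a set set \<Rightarrow> 'a \<Rightarrow> nat" where
  "hdegree E v = card {e\<in>E. v \<in> e}"

definition avg_degree :: "nat \<Rightarrow> 'a set \<Rightarrow> 'a set set \<Rightarrow> real" where
  "avg_degree r V E = real r * real (card E) / real (card V)"

definition edge_density :: "nat \<Rightarrow> 'a set \<Rightarrow> 'a set set \<Rightarrow> real" where
  "edge_density r V E = real (card E) / real (card V choose r)"

definition edges_in :: "'a set set \<Rightarrow> 'a set \<Rightarrow> nat" where
  "edges_in E U = card {e\<in>E. e \<subseteq> U}"

definition disc :: "nat \<Rightarrow> 'a set \<Rightarrow> 'a set set \<Rightarrow> 'a set \<Rightarrow> real" where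
  "disc r V E U = real (edges_in E U) - edge_density r V E * real (card U choose r)"

definition disc_plus :: "nat \<Rightarrow> 'a set \<Rightarrow> 'a set set \<Rightarrow> real" where
  "disc_plus r V E = Max ((disc r V E) ` Pow V)"

definition boundary :: "'a set set \<Rightarrow> 'a set \<Rightarrow> 'a set set" where
  "boundary E X = {e\<in>E. e \<inter> X \<noteq> {}}"

end

theory Submission imports Defs begin

lemma count_supersets:
  assumes "finite A" "B \<subseteq> A"
  shows "card {W. W \<subseteq> A \<and> B \<subseteq> W} = 2 ^ (card A - card B)"
proof -
  have "bij_betw (\<lambda>W. W - B) {W. W \<subseteq> A \<and> B \<subseteq> W} (Pow (A - B))"
    by (rule bij_betw_byWitness[where f'="\<lambda>Y. Y \<union> B"]) (use assms in auto)
  then have "card {W. W \<subseteq> A \<and> B \<subseteq> W} = card (Pow (A - B))"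
    by (rule bij_betw_same_card)
  also have "\<dots> = 2 ^ (card A - card B)"
    using assms by (simp add: card_Pow card_Diff_subset finite_subset)
  finally show ?thesis .
qed

lemma count_containing:
  assumes "finite V" "x \<in> V" "r \<ge> 1"
  shows "card {S. S \<subseteq> V \<and> card S = r \<and> x \<in> S} = (card V - 1) choose (r - 1)"
proof -
  have "bij_betw (\<lambda>S. S - {x}) {S. S \<subseteq> V \<and> card S = r \<and> x \<in> S} {T. T \<subseteq> V - {x} \<and> card T = r - 1}"
  proof (rule bij_betw_byWitness[where f'="\<lambda>T. insert x T"])
    show "\<forall>a\<in>{S. S \<subseteq> V \<and> card S = r \<and> x \<in> S}. insert x (a - {x}) = a" by auto
    show "\<forall>a\<in>{T. T \<subseteq> V - {x} \<and> card T = r - 1}. insert x a - {x} = a" by auto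
    show "(\<lambda>S. S - {x}) ` {S. S \<subseteq> V \<and> card S = r \<and> x \<in> S} \<subseteq> {T. T \<subseteq> V - {x} \<and> card T = r - 1}"
      by auto
    show "(\<lambda>T. insert x T) ` {T. T \<subseteq> V - {x} \<and> card T = r - 1} \<subseteq> {S. S \<subseteq> V \<and> card S = r \<and> x \<in> S}"
      using assms by (auto simp: card_insert_if finite_subset)
  qed
  then have "card {S. S \<subseteq> V \<and> card S = r \<and> x \<in> S} = card {T. T \<subseteq> V - {x} \<and> card T = r - 1}"
    by (rule bij_betw_same_card)
  also have "\<dots> = card (V - {x}) choose (r - 1)" using assms by (simp add: n_subsets)
  finally show ?thesis using assms by simp
qed

theorem lemma5p2:
  fixes r :: nat
  assumes "r \<ge> 2"
  shows "\<exists>c1 C :: real. c1 > 0 \<and> C > 0 \<and>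
    (\<forall>(V :: nat set) E X. uniform_hypergraph r V E \<longrightarrow> X \<subseteq> V \<longrightarrow>
       (\<forall>v\<in>X. real (hdegree E v) \<ge> C * avg_degree r V E) \<longrightarrow>
       disc_plus r V E \<ge> c1 * real (card (boundary E X)))"
proof (intro exI conjI allI impI)
  define c1 :: real where "c1 = (1/2)^(r+1)"
  define C :: real where "C = real r * 2^(r+1)"
  show "c1 > 0" unfolding c1_def by simp
  show "C > 0" unfolding C_def using assms by simp
  fix V :: "nat set" and E X
  assume hg: "uniform_hypergraph r V E" and XV: "X \<subseteq> V"
    and deg: "\<forall>v\<in>X. real (hdegree E v) \<ge> C * avg_degree r V E"
  have finV: "finite V" using hg unfolding uniform_hypergraph_def by simp
  have Esub: "\<And>e. e \<in> E \<Longrightarrow> e \<subseteq> V \<and> card e = r" using hg unfolding uniform_hypergraph_def by simp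
  define R where "R = {S. S \<subseteq> V \<and> card S = r}"
  have finR: "finite R" unfolding R_def using finV by simp
  have ER: "E \<subseteq> R" unfolding R_def using Esub by auto
  have finE: "finite E" using ER finR finite_subset by blast
  have finX: "finite X" using XV finV finite_subset by blast
  define A where "A = V - X"
  define N where "N = card A"
  define T where "T = Pow A"
  have finA: "finite A" unfolding A_def using finV by simp
  have finT: "finite T" unfolding T_def using finA by simp
  have cardT: "card T = 2^N" unfolding T_def N_def using finA by (simp add: card_Pow)
  define p where "p = edge_density r V E"
  define d where "d = avg_degree r V E"
  define B where "B = real (card (boundary E X))"
  define g :: "nat set \<Rightarrow> real" where "g S = (1/2)^card (S - X)" for S
  have le_max: "disc r V E (X \<union> W) \<le> disc_plus r V E" if "W \<in> T" for W
    unfolding disc_plus_def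
    by (rule Max_ge) (use that finV XV in \<open>auto simp: T_def A_def\<close>)
  have sumT_le: "(\<Sum>W\<in>T. disc r V E (X \<union> W)) \<le> 2^N * disc_plus r V E"
    using sum_bounded_above[of T "\<lambda>W. disc r V E (X \<union> W)" "disc_plus r V E", OF le_max] cardT
    by simp
  have edges_eq: "real (edges_in E U) = (\<Sum>e\<in>E. of_bool (e \<subseteq> U))" for U
    unfolding edges_in_def using finE by (simp add: Int_def Collect_conj_eq[symmetric] conj_commute)
  have binom_eq: "real (card U choose r) = (\<Sum>S\<in>R. of_bool (S \<subseteq> U))" if "U \<subseteq> V" for U
  proof -
    have "finite U" using that finV finite_subset by blast
    then have "card U choose r = card {S. S \<subseteq> U \<and> card S = r}" by (simp add: n_subsets)
    also have "{S. S \<subseteq> U \<and> card S = r} = R \<inter> {S. S \<subseteq> U}" unfolding R_def using that by auto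
    finally show ?thesis using finR by simp
  qed
  have F: "(\<Sum>W\<in>T. of_bool (S \<subseteq> X \<union> W)) = 2^N * g S" if "S \<subseteq> V" for S
  proof -
    have sub: "S - X \<subseteq> A" using that unfolding A_def by auto
    have "T \<inter> {W. S \<subseteq> X \<union> W} = {W. W \<subseteq> A \<and> S - X \<subseteq> W}" unfolding T_def by auto
    then have "(\<Sum>W\<in>T. of_bool (S \<subseteq> X \<union> W)) = real (card {W. W \<subseteq> A \<and> S - X \<subseteq> W})"
      using finT by simp
    also have "\<dots> = 2 ^ (N - card (S - X))" using count_supersets[OF finA sub] N_def by simp
    also have "\<dots> = 2^N * g S"
    proof -
      have k: "card (S - X) \<le> N" unfolding N_def using sub finA card_mono by blast
      have "(2::real)^N = 2^(N - card (S - X)) * 2^card (S - X)"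
        using k by (simp add: power_add[symmetric])
      then show ?thesis unfolding g_def by (simp add: power_one_over field_simps)
    qed
    finally show ?thesis .
  qed
  have avg: "(\<Sum>W\<in>T. disc r V E (X \<union> W)) = 2^N * ((\<Sum>e\<in>E. g e) - p * (\<Sum>S\<in>R. g S))"
  proof -
    have "(\<Sum>W\<in>T. disc r V E (X \<union> W)) =
        (\<Sum>W\<in>T. (\<Sum>e\<in>E. of_bool (e \<subseteq> X \<union> W)) - p * (\<Sum>S\<in>R. of_bool (S \<subseteq> X \<union> W)))"
    proof (rule sum.cong[OF refl])
      fix W assume "W \<in> T"
      then have "X \<union> W \<subseteq> V" using XV unfolding T_def A_def by auto
      then show "disc r V E (X \<union> W) = (\<Sum>e\<in>E. of_bool (e \<subseteq> X \<union> W)) - p * (\<Sum>S\<in>R. of_bool (S \<subseteq> X \<union> W))"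
        unfolding disc_def p_def by (simp only: binom_eq edges_eq)
    qed
    also have "\<dots> = (\<Sum>e\<in>E. \<Sum>W\<in>T. of_bool (e \<subseteq> X \<union> W)) - p * (\<Sum>S\<in>R. \<Sum>W\<in>T. of_bool (S \<subseteq> X \<union> W))"
      by (simp add: sum_subtractf sum_distrib_left sum.swap[of _ T] del: sum_of_bool_eq)
    also have "\<dots> = (\<Sum>e\<in>E. 2^N * g e) - p * (\<Sum>S\<in>R. 2^N * g S)"
      using F Esub by (simp add: R_def del: sum_of_bool_eq)
    finally show ?thesis by (simp only: sum_distrib_left[symmetric]) (simp add: algebra_simps)
  qed
  have r0: "r > 0" using assms by simp
  have gE1: "g e \<ge> (1/2)^r + (1/2)^r * of_bool (e \<inter> X \<noteq> {})" if "e \<in> E" for e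
  proof (cases "e \<inter> X = {}")
    case True
    then have "e - X = e" by auto
    then show ?thesis using Esub[OF that] True unfolding g_def by simp
  next
    case False
    have fe: "finite e" using Esub[OF that] finV finite_subset by blast
    have "e - X \<subset> e" using False by auto
    then have "card (e - X) < card e" using fe by (simp add: psubset_card_mono)
    then have k: "card (e - X) \<le> r - 1" using Esub[OF that] by simp
    have h1: "(1/2::real)^(r-1) \<le> (1/2)^card (e - X)" by (rule power_decreasing[OF k]) auto
    have h2: "(1/2::real)^(r-1) = 2 * (1/2)^r" using r0 by (cases r) auto
    have "2 * (1/2::real)^r \<le> (1/2)^card (e - X)" using h1 h2 by linarith
    then show ?thesis using False unfolding g_def by simp
  qed
  have bnd: "boundary E X = E \<inter> {e. e \<inter> X \<noteq> {}}" unfolding boundary_def by auto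
  have gE: "(\<Sum>e\<in>E. g e) \<ge> (1/2)^r * card E + (1/2)^r * B"
  proof -
    have "(\<Sum>e\<in>E. g e) \<ge> (\<Sum>e\<in>E. (1/2)^r + (1/2)^r * of_bool (e \<inter> X \<noteq> {}))"
      by (rule sum_mono) (rule gE1)
    also have "(\<Sum>e\<in>E. (1/2::real)^r + (1/2)^r * of_bool (e \<inter> X \<noteq> {})) = (1/2)^r * card E + (1/2)^r * B"
      unfolding B_def bnd using finE by (simp add: sum.distrib sum_distrib_left[symmetric])
    finally show ?thesis .
  qed
  have gR1: "g S \<le> (1/2)^r + of_bool (S \<inter> X \<noteq> {})" if "S \<in> R" for S
  proof (cases "S \<inter> X = {}")
    case True
    then have "S - X = S" by auto
    then show ?thesis using that unfolding g_def R_def by simp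
  next
    case False
    have "g S \<le> 1" unfolding g_def by (simp add: power_le_one)
    moreover have "(0::real) \<le> (1/2)^r" by simp
    ultimately have "g S \<le> (1/2)^r + 1" by linarith
    then show ?thesis using False by simp
  qed
  have gR: "(\<Sum>S\<in>R. g S) \<le> (1/2)^r * card R + (\<Sum>S\<in>R. of_bool (S \<inter> X \<noteq> {}))"
  proof -
    have "(\<Sum>S\<in>R. g S) \<le> (\<Sum>S\<in>R. (1/2)^r + of_bool (S \<inter> X \<noteq> {}))"
      by (rule sum_mono) (rule gR1)
    then show ?thesis by (simp add: sum.distrib mult.commute del: sum_of_bool_eq)
  qed
  have K: "(\<Sum>S\<in>R. of_bool (S \<inter> X \<noteq> {})) \<le> real (card X) * real ((card V - 1) choose (r - 1))"
  proof -
    have "(\<Sum>S\<in>R. (of_bool (S \<inter> X \<noteq> {}) :: real)) \<le> (\<Sum>S\<in>R. real (card (S \<inter> X)))"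
    proof (rule sum_mono)
      fix S assume "S \<in> R"
      have "finite (S \<inter> X)" using finX by simp
      then show "(of_bool (S \<inter> X \<noteq> {}) :: real) \<le> real (card (S \<inter> X))"
        by (cases "S \<inter> X = {}") (auto simp: card_gt_0_iff Suc_le_eq)
    qed
    also have "\<dots> = (\<Sum>S\<in>R. \<Sum>x\<in>X. of_bool (x \<in> S))"
      using finX by (intro sum.cong) (auto simp: Int_def conj_commute)
    also have "\<dots> = (\<Sum>x\<in>X. \<Sum>S\<in>R. of_bool (x \<in> S))"
      by (rule sum.swap)
    also have "\<dots> = (\<Sum>x\<in>X. real ((card V - 1) choose (r - 1)))"
    proof (rule sum.cong[OF refl])
      fix x assume "x \<in> X"
      then have "x \<in> V" using XV by auto
      have "R \<inter> {S. x \<in> S} = {S. S \<subseteq> V \<and> card S = r \<and> x \<in> S}" unfolding R_def by auto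
      then show "(\<Sum>S\<in>R. of_bool (x \<in> S)) = real ((card V - 1) choose (r - 1))"
        using finR count_containing[OF finV `x \<in> V`] r0 by simp
    qed
    finally show ?thesis by simp
  qed
  have cardR: "card R = card V choose r" unfolding R_def using finV by (simp add: n_subsets)
  have pR: "p * card R = card E"
  proof (cases "card R = 0")
    case True
    then have "R = {}" using finR by simp
    then have "E = {}" using ER by auto
    then show ?thesis using True by simp
  next
    case False
    then show ?thesis unfolding p_def edge_density_def cardR by simp
  qed
  have d0: "d \<ge> 0" unfolding d_def avg_degree_def by simp
  have p0: "p \<ge> 0" unfolding p_def edge_density_def by simp
  have pK: "p * real ((card V - 1) choose (r - 1)) * card X \<le> card X * d"
  proof (cases "X = {}")
    case True then show ?thesis by simp
  next
    case False
    then have "card V \<noteq> 0" using XV finV by auto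
    then obtain m where m: "card V = Suc m" using not0_implies_Suc by blast
    have id: "Suc m * (m choose (r - 1)) = (Suc m choose r) * r"
      using Suc_times_binomial_eq[of m "r - 1"] r0 by simp
    have "p * real ((card V - 1) choose (r - 1)) \<le> d"
    proof (cases "Suc m choose r = 0")
      case True
      then have "p = 0" unfolding p_def edge_density_def m by (simp only: of_nat_0 div_0) simp
      then show ?thesis using d0 by simp
    next
      case False
      have "real (Suc m) * real (m choose (r - 1)) = real (Suc m choose r) * real r"
        using id by (metis of_nat_mult)
      then have "real (m choose (r - 1)) / real (Suc m choose r) = real r / real (Suc m)"
        using False by (simp add: field_simps)
      then have eq: "real (m choose (r - 1)) / real (Suc m choose r) = real r / real (Suc m)" .
      have "p * real (m choose (r - 1)) = real (card E) * (real (m choose (r - 1)) / real (Suc m choose r))"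
        unfolding p_def edge_density_def m by simp
      also have "\<dots> = real (card E) * (real r / real (Suc m))" by (simp only: eq)
      also have "\<dots> = d" unfolding d_def avg_degree_def m by simp
      finally show ?thesis using m by simp
    qed
    then have "real (card X) * (p * real ((card V - 1) choose (r - 1))) \<le> real (card X) * d"
      by (rule mult_left_mono) simp
    then show ?thesis by (simp add: mult.commute)
  qed
  have degsum: "(\<Sum>x\<in>X. real (hdegree E x)) \<le> r * B"
  proof -
    have "(\<Sum>x\<in>X. real (hdegree E x)) = (\<Sum>x\<in>X. \<Sum>e\<in>E. of_bool (x \<in> e))"
      unfolding hdegree_def using finE by (intro sum.cong) (auto simp: Int_def)
    also have "\<dots> = (\<Sum>e\<in>E. \<Sum>x\<in>X. of_bool (x \<in> e))" by (rule sum.swap)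
    also have "\<dots> \<le> (\<Sum>e\<in>E. real r * of_bool (e \<inter> X \<noteq> {}))"
    proof (rule sum_mono)
      fix e assume e: "e \<in> E"
      have fe: "finite e" using Esub[OF e] finV finite_subset by blast
      have "(\<Sum>x\<in>X. (of_bool (x \<in> e)::real)) = real (card (X \<inter> e))"
        using finX by (simp add: Int_def)
      also have "card (X \<inter> e) \<le> card e" using fe by (simp add: card_mono)
      then have "real (card (X \<inter> e)) \<le> real r * of_bool (e \<inter> X \<noteq> {})"
        using Esub[OF e] by (cases "e \<inter> X = {}") (auto simp: Int_commute)
      finally show "(\<Sum>x\<in>X. (of_bool (x \<in> e)::real)) \<le> real r * of_bool (e \<inter> X \<noteq> {})" .
    qed
    also have "\<dots> = r * B" unfolding B_def bnd using finE
      by (simp add: sum_distrib_left[symmetric])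
    finally show ?thesis .
  qed
  have degX: "real (card X) * (C * d) \<le> (\<Sum>x\<in>X. real (hdegree E x))"
    using sum_mono[of X "\<lambda>_. C * d" "\<lambda>x. real (hdegree E x)"] deg unfolding d_def by simp
  have Xd: "real (card X) * d \<le> B / 2^(r+1)"
  proof -
    have "real (card X) * d * (real r * 2^(r+1)) \<le> r * B" using degX degsum unfolding C_def
      by (simp add: algebra_simps)
    then have "real r * (real (card X) * d * 2^(r+1)) \<le> real r * B" by (simp add: algebra_simps)
    then have "real (card X) * d * 2^(r+1) \<le> B" using r0 by simp
    then show ?thesis by (simp add: field_simps)
  qed
  have "2^N * disc_plus r V E \<ge> 2^N * ((\<Sum>e\<in>E. g e) - p * (\<Sum>S\<in>R. g S))"
    using sumT_le avg by simp
  then have dp: "disc_plus r V E \<ge> (\<Sum>e\<in>E. g e) - p * (\<Sum>S\<in>R. g S)" by simp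
  have "p * (\<Sum>S\<in>R. g S) \<le> p * ((1/2)^r * card R + real (card X) * real ((card V - 1) choose (r - 1)))"
    using gR K p0 by (intro mult_left_mono) auto
  also have "\<dots> = (1/2)^r * card E + p * real ((card V - 1) choose (r - 1)) * card X"
    using pR by (simp add: algebra_simps)
  finally have "disc_plus r V E \<ge> (1/2)^r * B - card X * d" using dp gE pK by linarith
  then have "disc_plus r V E \<ge> (1/2)^r * B - B / 2^(r+1)" using Xd by linarith
  moreover have "(1/2::real)^r * B - B / 2^(r+1) = c1 * B" unfolding c1_def
    by (simp add: field_simps power_one_over)
  ultimately show "disc_plus r V E \<ge> c1 * real (card (boundary E X))" unfolding B_def by simp
qed
end
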